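(* Let $(M,g)$ be any Riemannian $n$-manifold and $p,q\in\mathbb R$. If $n\geq 3$, then $\tilde K(\Pi)>0$ for every vertical 2-plane $\Pi$ in $T(BM_q)$ (equivalently, the metric induced by $h_{p,q}$ on the fibres $T_xM\cap BM_q$ has positive sectional curvature) if and only if $(p,q)\in\Gamma$. If $n=2$, the same holds if and only if $(p,q)\in\Gamma'$.
   Context: $\langle\cdot,\cdot\rangle=g$, $|e|^2=\langle e,e\rangle$, $\omega(e)=(1+|e|^2)^{-1}$. $h_{p,q}$ is the generalised Cheeger–Gromoll metric on $TM$: $h_{p,q}(X^h,Y^h)=\langle X,Y\rangle$, $h_{p,q}(X^h,Y^v)=0$, $h_{p,q}(X^v,Y^v)=\omega^p(\langle X,Y\rangle+q\langle X,e\rangle\langle Y,e\rangle)$, where $X^h,X^v$ are horizontal and vertical lifts w.r.t. the Levi-Civita connection; it is Riemannian on $BM_q=\{e:q|e|^2>-1\}$; $\tilde K$ is its sectional curvature; a 2-plane is vertical if it is spanned by vertical vectors. Let $\lambda(p)=8(1-p)/(8+p)$ for $p\neq-8$. Define $\Gamma_+^1=\{(p,q): -8<p\le -2,\ q>\lambda(p)\}$, $\Gamma_+^2=\{(p,q): -2\le p\le 0,\ 2p+q>0\}$, $\Gamma_+^3=\{(p,q): 0\le p\le 1,\ q>0\}$, $\Gamma_+=\Gamma_+^1\cup\Gamma_+^2\cup\Gamma_+^3$; $\Gamma_-=\{(p,q): p+q=1,\ q<0\}$, $\Gamma_-'=\{(p,q): p+q\ge1,\ q<0\}$, $\Gamma_Z=\{(p,0):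 0<p\le 2\}$, $\Gamma_Z'=\{(p,0): p>0\}$; $\Gamma=\Gamma_-\cup\Gamma_Z\cup\Gamma_+$ and $\Gamma'=\Gamma_-'\cup\Gamma_Z'\cup\Gamma_+$. *)

theory Defs
  imports "HOL-Analysis.Analysis"
begin

text \<open>A Riemannian metric on (an open subset of) a Euclidean vector space 'a is
  modelled as G :: 'a \<Rightarrow> 'a \<Rightarrow> 'a \<Rightarrow> real, with G e X Y the inner product of
  the tangent vectors X, Y at the point e (tangent spaces identified with 'a).\<close>

definition dder :: "('a::real_normed_vector \<Rightarrow> real) \<Rightarrow> 'a \<Rightarrow> 'a \<Rightarrow> real" where
  "dder f e X = deriv (\<lambda>t. f (e + t *\<^sub>R X)) 0"

definition vdder :: "('a::real_normed_vector \<Rightarrow> 'a) \<Rightarrow> 'a \<Rightarrow> 'a \<Rightarrow> 'a" where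
  "vdder W e X = vector_derivative (\<lambda>t. W (e + t *\<^sub>R X)) (at 0)"

text \<open>Levi-Civita connection on constant (coordinate) vector fields, via the Koszul
  formula: G(\<nabla>_X Y, Z) = 1/2 (X G(Y,Z) + Y G(X,Z) - Z G(X,Y)).\<close>
definition LC :: "('a::real_normed_vector \<Rightarrow> 'a \<Rightarrow> 'a \<Rightarrow> real) \<Rightarrow> 'a \<Rightarrow> 'a \<Rightarrow> 'a \<Rightarrow> 'a" where
  "LC G e X Y = (THE V. \<forall>Z. G e V Z =
      (dder (\<lambda>x. G x Y Z) e X + dder (\<lambda>x. G x X Z) e Y - dder (\<lambda>x. G x X Y) e Z) / 2)"

definition cov :: "('a::real_normed_vector \<Rightarrow> 'a \<Rightarrow> 'a \<Rightarrow> real) \<Rightarrow> ('a \<Rightarrow> 'a) \<Rightarrow> 'a \<Rightarrow> 'a \<Rightarrow> 'a" where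
  "cov G W e X = vdder W e X + LC G e X (W e)"

text \<open>Curvature R(X,Y)Z = \<nabla>_X\<nabla>_Y Z - \<nabla>_Y\<nabla>_X Z for constant fields (bracket zero).\<close>
definition curv :: "('a::real_normed_vector \<Rightarrow> 'a \<Rightarrow> 'a \<Rightarrow> real) \<Rightarrow> 'a \<Rightarrow> 'a \<Rightarrow> 'a \<Rightarrow> 'a \<Rightarrow> 'a" where
  "curv G e X Y Z = cov G (\<lambda>x. LC G x Y Z) e X - cov G (\<lambda>x. LC G x X Z) e Y"

definition sec_curv :: "('a::real_normed_vector \<Rightarrow> 'a \<Rightarrow> 'a \<Rightarrow> real) \<Rightarrow> 'a \<Rightarrow> 'a \<Rightarrow> 'a \<Rightarrow> real" where
  "sec_curv G e X Y = G e (curv G e X Y Y) X / (G e X X * G e Y Y - (G e X Y)\<^sup>2)"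

definition omega :: "'a::real_inner \<Rightarrow> real" where
  "omega e = 1 / (1 + (norm e)\<^sup>2)"

text \<open>The generalised Cheeger--Gromoll metric restricted to a fibre T_xM (identified
  isometrically with the Euclidean space 'a): vertical part of h_{p,q}.\<close>
definition hpq_fib :: "real \<Rightarrow> real \<Rightarrow> 'a::real_inner \<Rightarrow> 'a \<Rightarrow> 'a \<Rightarrow> real" where
  "hpq_fib p q e X Y = (omega e) powr p * (inner X Y + q * inner X e * inner Y e)"

definition BMq :: "real \<Rightarrow> 'a::real_inner set" where
  "BMq q = {e. q * (norm e)\<^sup>2 > -1}"

definition lam :: "real \<Rightarrow> real" where
  "lam p = 8 * (1 - p) / (8 + p)"

definition Gamma_plus :: "(real \<times> real) set" where
  "Gamma_plus =
     {(p,q). -8 < p \<and> p \<le> -2 \<and> q > lam p}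
   \<union> {(p,q). -2 \<le> p \<and> p \<le> 0 \<and> 2*p + q > 0}
   \<union> {(p,q). 0 \<le> p \<and> p \<le> 1 \<and> q > 0}"

definition Gamma_minus :: "(real \<times> real) set" where
  "Gamma_minus = {(p,q). p + q = 1 \<and> q < 0}"

definition Gamma_minus' :: "(real \<times> real) set" where
  "Gamma_minus' = {(p,q). p + q \<ge> 1 \<and> q < 0}"

definition Gamma_Z :: "(real \<times> real) set" where
  "Gamma_Z = {(p,q). q = 0 \<and> 0 < p \<and> p \<le> 2}"

definition Gamma_Z' :: "(real \<times> real) set" where
  "Gamma_Z' = {(p,q). q = 0 \<and> 0 < p}"

definition Gamma :: "(real \<times> real) set" where
  "Gamma = Gamma_minus \<union> Gamma_Z \<union> Gamma_plus"

definition Gamma' :: "(real \<times> real) set" where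
  "Gamma' = Gamma_minus' \<union> Gamma_Z' \<union> Gamma_plus"

end

theory Submission
  imports Defs
begin

lemma omega_powr: "omega (y::'a::real_inner) powr p = (1 + inner y y) powr (-p)"
proof -
  have "1 + inner y y > 0" by (smt (verit) inner_ge_zero)
  then show ?thesis unfolding omega_def
    by (simp add: power2_norm_eq_inner powr_divide powr_minus_divide)
qed

lemma hpq_line: "hpq_fib p q (e + t *\<^sub>R X) U V =
   (1 + (inner e e + 2*t*inner X e + t^2 * inner X X)) powr (-p) *
   (inner U V + q * (inner U e + t * inner U X) * (inner V e + t * inner V X))"
  unfolding hpq_fib_def omega_powr
  by (simp add: inner_add_left inner_add_right inner_commute algebra_simps power2_eq_square)

lemma dder_G:
  fixes e X U V :: "'a::real_inner"
  shows "dder (\<lambda>x. hpq_fib p q x U V) e X = omega e powr p *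
     (-2*p*inner X e/(1+inner e e)*(inner U V + q*inner U e*inner V e)
      + q*(inner U X*inner V e + inner U e*inner V X))"
proof -
  let ?g = "\<lambda>t::real. 1 + (inner e e + 2*t*inner X e + t^2 * inner X X)"
  let ?k = "\<lambda>t::real. inner U V + q * (inner U e + t * inner U X) * (inner V e + t * inner V X)"
  have pos: "?g 0 > 0" by (simp add: add_pos_nonneg)
  have dg: "(?g has_real_derivative 2*inner X e) (at 0)"
    by (auto intro!: derivative_eq_intros)
  have dk: "(?k has_real_derivative q*(inner U X*inner V e + inner U e*inner V X)) (at 0)"
    by (auto intro!: derivative_eq_intros simp: algebra_simps)
  have dgp: "((\<lambda>t. ?g t powr (-p)) has_real_derivative (-p) * ?g 0 powr (-p - 1) * (2*inner X e)) (at 0)"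
    using DERIV_fun_powr[OF dg pos, of "-p"] by simp
  have "((\<lambda>t. ?g t powr (-p) * ?k t) has_real_derivative
      (-p) * ?g 0 powr (-p - 1) * (2*inner X e) * ?k 0 + ?g 0 powr (-p) * (q*(inner U X*inner V e + inner U e*inner V X))) (at 0)"
    using DERIV_mult[OF dgp dk] by (simp add: ac_simps)
  then have D: "deriv (\<lambda>t. ?g t powr (-p) * ?k t) 0 = (-p) * ?g 0 powr (-p - 1) * (2*inner X e) * ?k 0 + ?g 0 powr (-p) * (q*(inner U X*inner V e + inner U e*inner V X))"
    by (rule DERIV_imp_deriv)
  have D': "deriv (\<lambda>t. hpq_fib p q (e + t *\<^sub>R X) U V) 0 = (-p) * ?g 0 powr (-p - 1) * (2*inner X e) * ?k 0 + ?g 0 powr (-p) * (q*(inner U X*inner V e + inner U e*inner V X))"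
    unfolding hpq_line by (rule D)
  have e1: "?g 0 powr (-p - 1) = ?g 0 powr (-p) / (1 + inner e e)"
    using pos by (simp add: powr_diff)
  show ?thesis
    unfolding dder_def D' e1 omega_powr[of e]
    by (simp add: field_simps)
qed

definition Lf :: "real \<Rightarrow> real \<Rightarrow> 'a::real_inner \<Rightarrow> 'a \<Rightarrow> 'a \<Rightarrow> 'a" where
  "Lf p q x U V = ((-p/(1+inner x x))*inner U x) *\<^sub>R V + ((-p/(1+inner x x))*inner V x) *\<^sub>R U
     + (((q + p/(1+inner x x))*inner U V + p/(1+inner x x)*q*inner U x*inner V x)/(1+q*inner x x)) *\<^sub>R x"

lemma Gquad_pos:
  fixes x W :: "'a::real_inner"
  assumes "1 + q*inner x x > 0" "W \<noteq> 0"
  shows "inner W W + q * (inner W x)^2 > 0"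
proof (cases "q \<ge> 0")
  case True then show ?thesis using assms(2) by (simp add: add_pos_nonneg)
next
  case False
  have cs: "(inner W x)^2 \<le> inner W W * inner x x" by (rule Cauchy_Schwarz_ineq)
  have "q * (inner W x)^2 \<ge> q * (inner W W * inner x x)"
    using cs False by (simp add: mult_left_mono_neg)
  moreover have "inner W W * (1 + q*inner x x) > 0" using assms by simp
  ultimately show ?thesis by (simp add: algebra_simps)
qed

lemma G_pos:
  fixes x W :: "'a::real_inner"
  assumes "1 + q*inner x x > 0" "W \<noteq> 0"
  shows "hpq_fib p q x W W > 0"
proof -
  have "omega x > 0" unfolding omega_def by (simp add: add_pos_nonneg)
  then show ?thesis unfolding hpq_fib_def using Gquad_pos[OF assms] by (simp add: power2_eq_square)
qed

lemma alg_LC: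
  fixes w q p F aa bb cc dd ee hh :: real
  assumes "1 + w > 0" "1 + q * w > 0"
  shows "F * ( (-p/(1+w))*aa*hh + (-p/(1+w))*bb*ee + (((q+p/(1+w))*dd + p/(1+w)*q*aa*bb)/(1+q*w))*cc
     + q*((-p/(1+w))*aa*bb + (-p/(1+w))*bb*aa + (((q+p/(1+w))*dd + p/(1+w)*q*aa*bb)/(1+q*w))*w)*cc )
   = ( F*(-2*p*aa/(1+w)*(hh + q*bb*cc) + q*(dd*cc + bb*ee))
     + F*(-2*p*bb/(1+w)*(ee + q*aa*cc) + q*(dd*cc + aa*hh))
     - F*(-2*p*cc/(1+w)*(dd + q*aa*bb) + q*(ee*bb + aa*hh)) )/2"
proof -
  define R where "R = 1/(1+w)"
  define B where "B = 1/(1+q*w)"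
  have r: "R * (1 + w) = 1" "B * (1 + q * w) = 1" using assms by (auto simp: R_def B_def)
  have eq1: "\<And>z. z/(1+w) = z*R" "\<And>z. z/(1+q*w) = z*B" by (auto simp: R_def B_def)
  show ?thesis unfolding eq1 using r by algebra
qed

lemma LC_eq:
  fixes x U V :: "'a::real_inner"
  assumes b: "1 + q*inner x x > 0"
  shows "LC (hpq_fib p q) x U V = Lf p q x U V"
proof -
  have s0: "1 + inner x x > 0" by (simp add: add_pos_nonneg)
  have key: "hpq_fib p q x (Lf p q x U V) Z =
      (dder (\<lambda>x. hpq_fib p q x V Z) x U + dder (\<lambda>x. hpq_fib p q x U Z) x V - dder (\<lambda>x. hpq_fib p q x U V) x Z) / 2" for Z
  proof -
    have "hpq_fib p q x (Lf p q x U V) Z = omega x powr p * (inner (Lf p q x U V) Z + q * inner (Lf p q x U V) x * inner Z x)"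
      by (simp add: hpq_fib_def)
    also have "\<dots> = omega x powr p * (
       (-p/(1+inner x x))*inner U x * inner V Z + (-p/(1+inner x x))*inner V x * inner U Z
       + (((q + p/(1+inner x x))*inner U V + p/(1+inner x x)*q*inner U x*inner V x)/(1+q*inner x x)) * inner x Z
       + q * ((-p/(1+inner x x))*inner U x * inner V x + (-p/(1+inner x x))*inner V x * inner U x
       + (((q + p/(1+inner x x))*inner U V + p/(1+inner x x)*q*inner U x*inner V x)/(1+q*inner x x)) * inner x x) * inner Z x)"
      unfolding Lf_def by (simp add: inner_add_left inner_scaleR_left inner_commute algebra_simps)
    also have "\<dots> = (dder (\<lambda>x. hpq_fib p q x V Z) x U + dder (\<lambda>x. hpq_fib p q x U Z) x V - dder (\<lambda>x. hpq_fib p q x U V) x Z) / 2"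
      unfolding dder_G using alg_LC[OF s0 b, where p=p and F="omega x powr p" and aa="inner U x" and bb="inner V x" and cc="inner Z x" and dd="inner U V" and ee="inner U Z" and hh="inner V Z"]
      by (simp add: inner_commute)
    finally show ?thesis .
  qed
  show ?thesis
    unfolding LC_def
  proof (rule the_equality)
    show "\<forall>Z. hpq_fib p q x (Lf p q x U V) Z =
      (dder (\<lambda>x. hpq_fib p q x V Z) x U + dder (\<lambda>x. hpq_fib p q x U Z) x V - dder (\<lambda>x. hpq_fib p q x U V) x Z) / 2"
      using key by blast
  next
    fix W assume H: "\<forall>Z. hpq_fib p q x W Z =
      (dder (\<lambda>x. hpq_fib p q x V Z) x U + dder (\<lambda>x. hpq_fib p q x U Z) x V - dder (\<lambda>x. hpq_fib p q x U V) x Z) / 2"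
    have "hpq_fib p q x (W - Lf p q x U V) (W - Lf p q x U V) = 0"
    proof -
      have lin: "hpq_fib p q x (A - B) Z = hpq_fib p q x A Z - hpq_fib p q x B Z" for A B Z :: 'a
        by (simp add: hpq_fib_def inner_diff_left algebra_simps)
      have "hpq_fib p q x W (W - Lf p q x U V) = hpq_fib p q x (Lf p q x U V) (W - Lf p q x U V)"
        using spec[OF H, of "W - Lf p q x U V"] key[of "W - Lf p q x U V"] by linarith
      then show ?thesis using lin by simp
    qed
    then show "W = Lf p q x U V" using G_pos[OF b, of "W - Lf p q x U V" p] by force
  qed
qed


definition DLf :: "real \<Rightarrow> real \<Rightarrow> 'a::real_inner \<Rightarrow> 'a \<Rightarrow> 'a \<Rightarrow> 'a \<Rightarrow> 'a" where
  "DLf p q e X U V = (let s = inner e e; x = inner X e; al0 = -p/(1+s); alD = 2*p*x/(1+s)^2;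
      bi0 = 1/(1+q* s); biD = -(2*q*x)/(1+q* s)^2;
      uE = inner U e; vE = inner V e; uX = inner U X; vX = inner V X; uv = inner U V
    in (alD*uE + al0*uX) *\<^sub>R V + (alD* vE + al0* vX) *\<^sub>R U
     + ((-alD*uv - q*(alD*uE* vE + al0*(uX* vE + uE* vX)))*bi0 + ((q-al0)*uv - al0*q*uE* vE)*biD) *\<^sub>R e
     + (((q-al0)*uv - al0*q*uE* vE)*bi0) *\<^sub>R X)"

lemma Lf_alt: "Lf p q x U V = ((-p/(1+inner x x))*inner U x) *\<^sub>R V + ((-p/(1+inner x x))*inner V x) *\<^sub>R U
   + (((q - (-p/(1+inner x x)))*inner U V - (-p/(1+inner x x))*q*inner U x*inner V x) * (1/(1+q*inner x x))) *\<^sub>R x"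
  unfolding Lf_def by simp

lemma Lf_hasder:
  fixes e X U V :: "'a::real_inner"
  assumes b: "1 + q*inner e e > 0"
  shows "((\<lambda>t. Lf p q (e + t *\<^sub>R X) U V) has_vector_derivative DLf p q e X U V) (at 0)"
proof -
  define s where "s = inner e e"
  define x where "x = inner X e"
  define xx where "xx = inner X X"
  define uE where "uE = inner U e"
  define vE where "vE = inner V e"
  define uX where "uX = inner U X"
  define vX where "vX = inner V X"
  define uv where "uv = inner U V"
  have s0: "1 + s > 0" unfolding s_def by (simp add: add_pos_nonneg)
  have b0: "1 + q* s > 0" using b s_def by simp
  define al where "al = (\<lambda>t::real. -p/(1+(s+2*t*x+t^2*xx)))"
  define bi where "bi = (\<lambda>t::real. 1/(1+q*(s+2*t*x+t^2*xx)))"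
  have line: "Lf p q (e + t *\<^sub>R X) U V = (al t * (uE + t*uX)) *\<^sub>R V + (al t * (vE + t* vX)) *\<^sub>R U
     + (((q - al t)*uv - al t*q*(uE + t*uX)*(vE + t* vX)) * bi t) *\<^sub>R (e + t *\<^sub>R X)" for t
  proof -
    have n: "inner (e + t *\<^sub>R X) (e + t *\<^sub>R X) = s+2*t*x+t^2*xx"
      unfolding s_def x_def xx_def by (simp add: inner_add_left inner_add_right inner_commute power2_eq_square algebra_simps)
    show ?thesis unfolding Lf_alt n al_def bi_def
      by (simp add: inner_add_right uE_def vE_def uX_def vX_def uv_def inner_commute)
  qed
  have dal: "(al has_real_derivative (2*p*x/(1+s)^2)) (at 0)"
    unfolding al_def using s0
    by (auto intro!: derivative_eq_intros simp: power2_eq_square field_simps)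
  have dbi: "(bi has_real_derivative (-(2*q*x)/(1+q* s)^2)) (at 0)"
    unfolding bi_def using b0
    by (auto intro!: derivative_eq_intros simp: power2_eq_square field_simps)
  have al0: "al 0 = -p/(1+s)" and bi0: "bi 0 = 1/(1+q* s)" unfolding al_def bi_def by simp_all
  have du: "((\<lambda>t. uE + t*uX) has_real_derivative uX) (at 0)"
    by (auto intro!: derivative_eq_intros)
  have dv: "((\<lambda>t. vE + t* vX) has_real_derivative vX) (at 0)"
    by (auto intro!: derivative_eq_intros)
  have da: "((\<lambda>t. al t * (uE + t*uX)) has_real_derivative (2*p*x/(1+s)^2*uE + (-p/(1+s))*uX)) (at 0)"
    using DERIV_mult[OF dal du] al0 by (simp add: algebra_simps)
  have db: "((\<lambda>t. al t * (vE + t* vX)) has_real_derivative (2*p*x/(1+s)^2* vE + (-p/(1+s))* vX)) (at 0)"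
    using DERIV_mult[OF dal dv] al0 by (simp add: algebra_simps)
  have dn: "((\<lambda>t. (q - al t)*uv - al t*q*(uE + t*uX)*(vE + t* vX)) has_real_derivative
      (-(2*p*x/(1+s)^2)*uv - q*((2*p*x/(1+s)^2)*uE* vE + (-p/(1+s))*(uX* vE + uE* vX)))) (at 0)"
    using al0 by (auto intro!: derivative_eq_intros dal du dv simp: algebra_simps)
  have dc: "((\<lambda>t. ((q - al t)*uv - al t*q*(uE + t*uX)*(vE + t* vX)) * bi t) has_real_derivative
      ((-(2*p*x/(1+s)^2)*uv - q*((2*p*x/(1+s)^2)*uE* vE + (-p/(1+s))*(uX* vE + uE* vX)))*(1/(1+q* s))
       + ((q - (-p/(1+s)))*uv - (-p/(1+s))*q*uE* vE)*(-(2*q*x)/(1+q* s)^2))) (at 0)"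
    using DERIV_mult[OF dn dbi] al0 bi0 by (simp add: algebra_simps)
  have dline: "((\<lambda>t. e + t *\<^sub>R X) has_vector_derivative X) (at 0)"
    by (auto intro!: derivative_eq_intros)
  have "((\<lambda>t. (al t * (uE + t*uX)) *\<^sub>R V + (al t * (vE + t* vX)) *\<^sub>R U
     + (((q - al t)*uv - al t*q*(uE + t*uX)*(vE + t* vX)) * bi t) *\<^sub>R (e + t *\<^sub>R X)) has_vector_derivative
      DLf p q e X U V) (at 0)"
    apply (rule has_vector_derivative_eq_rhs)
     apply (rule dline da db dc has_vector_derivative_add has_vector_derivative_scaleR has_vector_derivative_const)+
    unfolding DLf_def Let_def al0 bi0 s_def[symmetric] x_def[symmetric] uE_def[symmetric] vE_def[symmetric]
      uX_def[symmetric] vX_def[symmetric] uv_def[symmetric]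
    by (simp add: algebra_simps)
  then show ?thesis unfolding line .
qed

lemma vdder_LC:
  fixes e X U V :: "'a::real_inner"
  assumes b: "1 + q*inner e e > 0"
  shows "vdder (\<lambda>x. LC (hpq_fib p q) x U V) e X = DLf p q e X U V"
proof -
  define S where "S = {t::real. 0 < 1 + q*inner (e + t *\<^sub>R X) (e + t *\<^sub>R X)}"
  have oS: "open S" unfolding S_def
    by (rule open_Collect_less) (auto intro!: continuous_intros)
  have 0: "0 \<in> S" using b unfolding S_def by simp
  have "((\<lambda>t. LC (hpq_fib p q) (e + t *\<^sub>R X) U V) has_vector_derivative DLf p q e X U V) (at 0)"
    apply (rule has_vector_derivative_transform_within_open[OF Lf_hasder[OF b] oS 0])
    using LC_eq unfolding S_def by fastforce
  then show ?thesis unfolding vdder_def by (rule vector_derivative_at)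
qed

lemma curv_eq:
  fixes e X Y :: "'a::real_inner"
  assumes b: "1 + q*inner e e > 0"
  shows "curv (hpq_fib p q) e X Y Y = DLf p q e X Y Y + Lf p q e X (Lf p q e Y Y) - (DLf p q e Y X Y + Lf p q e Y (Lf p q e X Y))"
  unfolding curv_def cov_def vdder_LC[OF b] LC_eq[OF b] ..

lemma curv_scalar:
  fixes e X Y :: "'a::real_inner"
  assumes b: "1 + q*inner e e > 0"
  defines "s \<equiv> inner e e" and "x \<equiv> inner X e" and "y \<equiv> inner Y e"
    and "xx \<equiv> inner X X" and "yy \<equiv> inner Y Y" and "xy \<equiv> inner X Y"
  shows "inner (curv (hpq_fib p q) e X Y Y) X + q * inner (curv (hpq_fib p q) e X Y Y) e * x =
    (p*(p-2+q-q* s)*(x^2*yy + y^2*xx - 2*x*y*xy) + ((2*p+q) + (1+2*q-(1-p)^2)* s + q* s^2)*(xx*yy - xy^2))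
     / ((1+s)^2*(1+q* s))"
proof -
  have s0: "1 + s > 0" unfolding s_def by (simp add: add_pos_nonneg)
  have b0: "1 + q* s > 0" using b s_def by simp
  define R where "R = 1/(1+s)"
  define B where "B = 1/(1+q* s)"
  have r: "R * (1 + s) = 1" "B * (1 + q * s) = 1" using s0 b0 by (auto simp: R_def B_def)
  have dR: "\<And>z. z/(1+s) = z*R" "\<And>z. z/(1+q* s) = z*B" "\<And>z. z/(1+s)^2 = z*R^2" "\<And>z. z/(1+q* s)^2 = z*B^2"
    "\<And>z. z/((1+s)^2*(1+q* s)) = z*R^2*B"
    by (auto simp: R_def B_def power2_eq_square)
  have ie: "inner e e = s" "inner X e = x" "inner e X = x" "inner Y e = y" "inner e Y = y"
    "inner X X = xx" "inner Y Y = yy" "inner X Y = xy" "inner Y X = xy"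
    by (simp_all add: s_def x_def y_def xx_def yy_def xy_def inner_commute)
  show ?thesis
    unfolding curv_eq[OF b] DLf_def Lf_def Let_def
    apply (simp only: inner_add_left inner_diff_left inner_scaleR_left inner_add_right inner_diff_right inner_scaleR_right ie)
    apply (simp only: dR)
    using r by algebra
qed

lemma span2_obtain:
  fixes e X Y :: "'a::real_vector"
  assumes "e \<in> span {X, Y}"
  obtains a b where "e = a *\<^sub>R X + b *\<^sub>R Y"
proof -
  from assms obtain k where "e - k *\<^sub>R X \<in> span {Y}" unfolding span_insert by auto
  then obtain j where "e - k *\<^sub>R X = j *\<^sub>R Y" unfolding span_singleton by auto
  then have "e = k *\<^sub>R X + j *\<^sub>R Y" by (simp add: algebra_simps)
  then show ?thesis using that by blast
qed

lemma dim2_span: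
  fixes X Y :: "'a::euclidean_space"
  assumes "DIM('a) = 2" "independent {X, Y}" "X \<noteq> Y"
  shows "e \<in> span {X, Y}"
proof -
  have "dim (UNIV::'a set) \<le> card {X, Y}" using assms by (simp add: dim_UNIV)
  then have "UNIV \<subseteq> span {X, Y}" using card_ge_dim_independent[of "{X,Y}" UNIV] assms(2) by auto
  then show ?thesis by auto
qed

lemma indep2_Y_notin:
  fixes X Y :: "'a::real_vector"
  assumes "independent {X, Y}" "X \<noteq> Y"
  shows "X \<notin> span {Y}" "Y \<noteq> 0"
proof -
  show "X \<notin> span {Y}" using assms by (simp add: independent_insert)
  show "Y \<noteq> 0"
  proof
    assume "Y = 0"
    then have "dependent {X, Y}" by (simp add: dependent_zero)
    then show False using assms(1) by simp
  qed
qed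

lemma gram_pos:
  fixes X Y :: "'a::real_inner"
  assumes "independent {X, Y}" "X \<noteq> Y"
  shows "inner X X * inner Y Y - (inner X Y)^2 > 0"
proof -
  have nY: "Y \<noteq> 0" and ns: "X \<notin> span {Y}" using indep2_Y_notin[OF assms] by auto
  have yy: "inner Y Y > 0" using nY by simp
  define c where "c = inner X Y / inner Y Y"
  have cy: "c * inner Y Y = inner X Y" unfolding c_def using yy by simp
  define W where "W = X - c *\<^sub>R Y"
  have "W \<noteq> 0"
  proof
    assume "W = 0"
    then have X: "X = c *\<^sub>R Y" unfolding W_def by simp
    have "Y \<in> span {Y}" by (rule span_base) simp
    then have "c *\<^sub>R Y \<in> span {Y}" by (rule span_scale)
    then show False using ns X by simp
  qed
  then have w: "inner W W > 0" by simp
  have cm: "inner Y X = inner X Y" by (simp add: inner_commute)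
  have "inner W W * inner Y Y = inner X X * inner Y Y - (inner X Y)^2"
    unfolding W_def
    apply (simp only: inner_diff_left inner_diff_right inner_scaleR_left inner_scaleR_right cm)
    unfolding cy[symmetric] by (simp add: power2_eq_square algebra_simps)
  then show ?thesis using w yy by (metis mult_pos_pos)
qed

lemma PP_nonneg:
  fixes X Y e :: "'a::real_inner"
  shows "(inner X e)^2 * inner Y Y + (inner Y e)^2 * inner X X - 2 * inner X e * inner Y e * inner X Y \<ge> 0"
proof -
  have "inner (inner X e *\<^sub>R Y - inner Y e *\<^sub>R X) (inner X e *\<^sub>R Y - inner Y e *\<^sub>R X)
      = (inner X e)^2 * inner Y Y + (inner Y e)^2 * inner X X - 2 * inner X e * inner Y e * inner X Y"
    by (simp add: inner_diff_left inner_diff_right inner_commute power2_eq_square algebra_simps)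
  then show ?thesis by (metis inner_ge_zero)
qed

lemma D3_nonneg:
  fixes X Y e :: "'a::real_inner"
  shows "(inner X e)^2 * inner Y Y + (inner Y e)^2 * inner X X - 2 * inner X e * inner Y e * inner X Y
     \<le> inner e e * (inner X X * inner Y Y - (inner X Y)^2)"
proof -
  define PP where "PP = (inner X e)^2 * inner Y Y + (inner Y e)^2 * inner X X - 2 * inner X e * inner Y e * inner X Y"
  define G where "G = inner X X * inner Y Y - (inner X Y)^2"
  define Q where "Q = (inner Y Y * inner X e - inner X Y * inner Y e) *\<^sub>R X + (inner X X * inner Y e - inner X Y * inner X e) *\<^sub>R Y"
  have pp: "PP \<ge> 0" unfolding PP_def by (rule PP_nonneg)
  have c: "inner Y X = inner X Y" "inner e X = inner X e" "inner e Y = inner Y e" by (simp_all add: inner_commute)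
  have qe: "inner Q e = PP" unfolding Q_def PP_def
    apply (simp only: inner_add_left inner_scaleR_left c)
    by algebra
  have qq: "inner Q Q = G * PP" unfolding Q_def PP_def G_def
    apply (simp only: inner_add_left inner_add_right inner_scaleR_left inner_scaleR_right c)
    by algebra
  have cs: "(inner Q e)^2 \<le> inner Q Q * inner e e" by (rule Cauchy_Schwarz_ineq)
  show ?thesis
  proof (cases "PP = 0")
    case True
    have "G \<ge> 0" unfolding G_def using Cauchy_Schwarz_ineq[of X Y] by simp
    then show ?thesis using True PP_def G_def by simp
  next
    case False
    then have "PP > 0" using pp by simp
    from cs have "PP * PP \<le> (G * inner e e) * PP" unfolding qe qq by (simp add: power2_eq_square algebra_simps)
    then have "PP \<le> G * inner e e" using \<open>PP > 0\<close> by simp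
    then show ?thesis unfolding PP_def G_def by (simp add: algebra_simps)
  qed
qed

lemma D3_zero:
  fixes X Y e :: "'a::real_inner"
  assumes "e = a *\<^sub>R X + b *\<^sub>R Y"
  shows "(inner X e)^2 * inner Y Y + (inner Y e)^2 * inner X X - 2 * inner X e * inner Y e * inner X Y
     = inner e e * (inner X X * inner Y Y - (inner X Y)^2)"
proof -
  have c: "inner Y X = inner X Y" by (simp add: inner_commute)
  show ?thesis unfolding assms
    apply (simp only: inner_add_left inner_add_right inner_scaleR_left inner_scaleR_right c)
    by algebra
qed

definition Qf :: "real \<Rightarrow> real \<Rightarrow> real \<Rightarrow> real" where
  "Qf p q s = (2*p+q) + q*(2+p)* s + q*(1-p)* s^2"
definition Tf :: "real \<Rightarrow> real \<Rightarrow> real \<Rightarrow> real" where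
  "Tf p q s = (2*p+q) + (1+2*q-(1-p)^2)* s + q* s^2"

lemma QT_rel: "Qf p q s = p*(p-2+q-q* s)* s + Tf p q s"
  unfolding Qf_def Tf_def by (simp add: power2_eq_square algebra_simps)

lemma sec_pos_iff:
  fixes e X Y :: "'a::real_inner"
  assumes b: "1 + q*inner e e > 0"
  defines "s \<equiv> inner e e" and "x \<equiv> inner X e" and "y \<equiv> inner Y e"
    and "xx \<equiv> inner X X" and "yy \<equiv> inner Y Y" and "xy \<equiv> inner X Y"
  assumes g: "xx*yy - xy^2 + q*(x^2*yy + y^2*xx - 2*x*y*xy) > 0"
  shows "sec_curv (hpq_fib p q) e X Y > 0 \<longleftrightarrow>
     p*(p-2+q-q* s)*(x^2*yy + y^2*xx - 2*x*y*xy) + Tf p q s*(xx*yy - xy^2) > 0"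
proof -
  have s0: "1 + s > 0" unfolding s_def by (simp add: add_pos_nonneg)
  have b0: "1 + q* s > 0" using b s_def by simp
  define f where "f = omega e powr p"
  have "omega e > 0" unfolding omega_def by (simp add: add_pos_nonneg)
  then have f0: "f > 0" unfolding f_def by simp
  define N where "N = p*(p-2+q-q* s)*(x^2*yy + y^2*xx - 2*x*y*xy) + Tf p q s*(xx*yy - xy^2)"
  have num: "hpq_fib p q e (curv (hpq_fib p q) e X Y Y) X = f * (N / ((1+s)^2*(1+q* s)))"
  proof -
    have h: "hpq_fib p q e V X = f * (inner V X + q * inner V e * inner X e)" for V
      by (simp add: hpq_fib_def f_def)
    show ?thesis unfolding h N_def Tf_def
      using curv_scalar[OF b, of p X Y] unfolding s_def x_def y_def xx_def yy_def xy_def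
      by simp
  qed
  have c: "inner Y X = xy" "inner e X = x" "inner e Y = y" using xy_def x_def y_def by (simp_all add: inner_commute)
  have den: "hpq_fib p q e X X * hpq_fib p q e Y Y - (hpq_fib p q e X Y)^2
     = f^2 * (xx*yy - xy^2 + q*(x^2*yy + y^2*xx - 2*x*y*xy))"
    unfolding hpq_fib_def f_def[symmetric] x_def[symmetric] y_def[symmetric] xx_def[symmetric]
      yy_def[symmetric] xy_def[symmetric]
    by (simp add: power2_eq_square algebra_simps)
  have dpos: "f^2 * (xx*yy - xy^2 + q*(x^2*yy + y^2*xx - 2*x*y*xy)) > 0" using f0 g by simp
  have gen: "\<And>a D::real. D > 0 \<Longrightarrow> (0 < a / D) = (0 < a)" by (simp add: zero_less_divide_iff)
  have d1: "(1+s)^2*(1+q* s) > 0" using s0 b0 by simp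
  have "sec_curv (hpq_fib p q) e X Y > 0 \<longleftrightarrow> f * (N / ((1+s)^2*(1+q* s))) > 0"
    unfolding sec_curv_def num den by (rule gen[OF dpos])
  also have "\<dots> \<longleftrightarrow> N / ((1+s)^2*(1+q* s)) > 0" using f0 by (simp only: zero_less_mult_iff) auto
  also have "\<dots> \<longleftrightarrow> N > 0" by (rule gen[OF d1])
  finally show ?thesis unfolding N_def .
qed

lemma BMq_iff: "(e::'a::real_inner) \<in> BMq q \<longleftrightarrow> 1 + q*inner e e > 0"
  unfolding BMq_def by (simp add: power2_norm_eq_inner, linarith)

lemma two_basis:
  assumes "DIM('a::euclidean_space) \<ge> 2"
  obtains b1 b2 :: "'a::euclidean_space" where "b1 \<in> Basis" "b2 \<in> Basis" "b1 \<noteq> b2"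
proof -
  obtain A where A: "A \<subseteq> (Basis::'a set)" "card A = 2" using ex_card[OF assms] by blast
  then obtain b c where bc: "A = {b, c}" "b \<noteq> c" unfolding card_2_iff by blast
  show ?thesis by (rule that[of b c]) (use A(1) bc in auto)
qed

lemma three_basis:
  assumes "DIM('a::euclidean_space) \<ge> 3"
  obtains b1 b2 b3 :: "'a::euclidean_space" where "b1 \<in> Basis" "b2 \<in> Basis" "b3 \<in> Basis" "b1 \<noteq> b2" "b1 \<noteq> b3" "b2 \<noteq> b3"
proof -
  obtain A where A: "A \<subseteq> (Basis::'a set)" "card A = 3" using ex_card[OF assms] by blast
  then have "A \<noteq> {}" by auto
  then obtain a where a: "a \<in> A" by blast
  have fA: "finite A" by (rule finite_subset[OF A(1)]) simp
  have "card (A - {a}) = 2" using A(2) a fA by simp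
  then obtain b c where bc: "A - {a} = {b, c}" "b \<noteq> c" unfolding card_2_iff by blast
  have "b \<in> A - {a}" "c \<in> A - {a}" using bc(1) by blast+
  then have abc: "a \<noteq> b" "a \<noteq> c" "b \<in> A" "c \<in> A" by blast+
  have "a \<in> Basis" "b \<in> Basis" "c \<in> Basis" using abc a A(1) by blast+
  then show ?thesis using that[of a b c] abc bc(2) by metis
qed

definition Pcond :: "real \<Rightarrow> real \<Rightarrow> 'a::euclidean_space itself \<Rightarrow> bool" where
  "Pcond p q T = (\<forall>e::'a. e \<in> BMq q \<longrightarrow> (\<forall>X Y::'a. independent {X, Y} \<and> X \<noteq> Y \<longrightarrow>
               sec_curv (hpq_fib p q) e X Y > 0))"

lemma fwd_Q:
  assumes d: "DIM('a::euclidean_space) \<ge> 2" and P: "Pcond p q TYPE('a)"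
    and s: "s \<ge> 0" "1 + q* s > 0"
  shows "Qf p q s > 0"
proof -
  obtain b1 b2 :: 'a where b: "b1 \<in> Basis" "b2 \<in> Basis" "b1 \<noteq> b2" using two_basis[OF d] by blast
  define e where "e = sqrt s *\<^sub>R b1"
  have ee: "inner e e = s" unfolding e_def using b s by (simp add: inner_Basis)
  have e1: "inner b1 e = sqrt s" "inner b2 e = 0" unfolding e_def using b by (auto simp: inner_Basis)
  have bb: "inner b1 b1 = 1" "inner b2 b2 = 1" "inner b1 b2 = 0" using b by (auto simp: inner_Basis)
  have eB: "e \<in> BMq q" unfolding BMq_iff ee using s by simp
  have ind: "independent {b1, b2}" by (rule independent_mono[OF independent_Basis]) (use b in auto)
  have "sec_curv (hpq_fib p q) e b1 b2 > 0" using P eB ind b unfolding Pcond_def by blast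
  moreover have "1 + q*inner e e > 0" using ee s by simp
  ultimately have "p*(p-2+q-q* s)*((sqrt s)^2*1 + 0^2*1 - 2* sqrt s*0*0) + Tf p q s*(1*1 - 0^2) > 0"
    using sec_pos_iff[of q e b1 b2 p] unfolding ee e1 bb using s by simp
  then show ?thesis unfolding QT_rel using s by simp
qed

lemma fwd_T:
  assumes d: "DIM('a::euclidean_space) \<ge> 3" and P: "Pcond p q TYPE('a)"
    and s: "s \<ge> 0" "1 + q* s > 0"
  shows "Tf p q s > 0"
proof -
  obtain b1 b2 b3 :: 'a where b: "b1 \<in> Basis" "b2 \<in> Basis" "b3 \<in> Basis" "b1 \<noteq> b2" "b1 \<noteq> b3" "b2 \<noteq> b3"
    using three_basis[OF d] by blast
  define e where "e = sqrt s *\<^sub>R b1"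
  have ee: "inner e e = s" unfolding e_def using b s by (simp add: inner_Basis)
  have e1: "inner b2 e = 0" "inner b3 e = 0" unfolding e_def using b by (auto simp: inner_Basis)
  have bb: "inner b2 b2 = 1" "inner b3 b3 = 1" "inner b2 b3 = 0" using b by (auto simp: inner_Basis)
  have eB: "e \<in> BMq q" unfolding BMq_iff ee using s by simp
  have ind: "independent {b2, b3}" by (rule independent_mono[OF independent_Basis]) (use b in auto)
  have "sec_curv (hpq_fib p q) e b2 b3 > 0" using P eB ind b unfolding Pcond_def by blast
  moreover have "1 + q*inner e e > 0" using ee s by simp
  ultimately have "p*(p-2+q-q* s)*(0^2*1 + 0^2*1 - 2*0*0*0) + Tf p q s*(1*1 - 0^2) > 0"
    using sec_pos_iff[of q e b2 b3 p] unfolding ee e1 bb using s by simp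
  then show ?thesis by simp
qed

lemma neg_near_left:
  fixes g :: "real \<Rightarrow> real"
  assumes c: "isCont g s0" and n: "g s0 < 0" and p: "0 < s0"
  shows "\<exists>s. 0 < s \<and> s < s0 \<and> g s < 0"
proof -
  have "(g \<longlongrightarrow> g s0) (at s0)" using c by (simp add: isCont_def)
  then have "eventually (\<lambda>s. g s < 0) (at s0)" using n by (rule order_tendstoD(2))
  then obtain d where d: "d > 0" "\<And>x. x \<noteq> s0 \<and> dist x s0 < d \<Longrightarrow> g x < 0"
    unfolding eventually_at by auto
  define s where "s = s0 - min d s0 / 2"
  have "0 < s" "s < s0" "dist s s0 < d" using d p unfolding s_def dist_real_def by (auto simp: min_def)
  then show ?thesis using d(2)[of s] by auto
qed

lemma isCont_Qf: "isCont (Qf p q) s" unfolding Qf_def[abs_def] by (intro continuous_intros)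
lemma isCont_Tf: "isCont (Tf p q) s" unfolding Tf_def[abs_def] by (intro continuous_intros)

lemma R2_bwd:
  assumes G: "(p, q) \<in> Gamma'" and s: "s \<ge> 0" "1 + q* s > 0"
  shows "Qf p q s > 0"
proof -
  consider (m) "p + q \<ge> 1" "q < 0" | (z) "q = 0" "p > 0" | (a) "-8 < p" "p \<le> -2" "q > lam p"
    | (b) "-2 \<le> p" "p \<le> 0" "2*p + q > 0" | (c) "0 \<le> p" "p \<le> 1" "q > 0"
    using G unfolding Gamma'_def Gamma_minus'_def Gamma_Z'_def Gamma_plus_def by auto
  then show ?thesis
  proof cases
    case m
    have id: "Qf p q s = (1 + q* s)*(2 + q* s - q) + (p+q-1)*(2 + q* s - q* s^2)"
      unfolding Qf_def by (simp add: power2_eq_square algebra_simps)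
    have t1: "(1 + q* s)*(2 + q* s - q) > 0" using s m by (intro mult_pos_pos) auto
    have "2 + q* s - q* s^2 > 0"
    proof (cases "s \<le> 1")
      case True
      have "q* s \<le> 0" using m s by (simp add: mult_nonpos_nonneg)
      then have "q* s*(1-s) \<ge> q* s*1" using True s by (intro mult_left_mono_neg) auto
      then show ?thesis using s by (simp add: power2_eq_square algebra_simps)
    next
      case False
      have "(-q)* s*(s-1) \<ge> 0" using m False s by (intro mult_nonneg_nonneg) auto
      then show ?thesis by (simp add: power2_eq_square algebra_simps)
    qed
    then have "(p+q-1)*(2 + q* s - q* s^2) \<ge> 0" using m by simp
    then show ?thesis using id t1 by linarith
  next
    case z then show ?thesis unfolding Qf_def by simp
  next
    case a
    have l: "lam p * (8 + p) = 8*(1-p)" unfolding lam_def using a by simp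
    have q0: "q*(8+p) > 8*(1-p)" using a l by (smt (verit) mult_strict_right_mono)
    have "lam p > 0" unfolding lam_def using a by (simp add: divide_pos_pos)
    then have qp: "q > 0" using a by simp
    define A where "A = q*(1-p)"
    define Bc where "Bc = q*(2+p)"
    define C where "C = 2*p+q"
    have A0: "A > 0" unfolding A_def using qp a by simp
    have disc: "4*A*C - Bc^2 = q*(-p)*(q*(8+p) - 8*(1-p))"
      unfolding A_def Bc_def C_def by (simp add: power2_eq_square algebra_simps)
    have "q*(-p)*(q*(8+p) - 8*(1-p)) > 0" using qp a q0 by (intro mult_pos_pos) auto
    then have dpos: "4*A*C - Bc^2 > 0" using disc by simp
    have "4*A*Qf p q s = (2*A* s + Bc)^2 + (4*A*C - Bc^2)"
      unfolding Qf_def A_def Bc_def C_def by (simp add: power2_eq_square algebra_simps)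
    then have "4*A*Qf p q s > 0" using dpos by (smt (verit) zero_le_power2)
    then show ?thesis using A0 by (simp add: zero_less_mult_iff)
  next
    case b
    have "q > 0" using b by linarith
    then have "q*(2+p)* s \<ge> 0" "q*(1-p)* s^2 \<ge> 0" using b s by simp_all
    then show ?thesis unfolding Qf_def using b by linarith
  next
    case c
    then have "q*(2+p)* s \<ge> 0" "q*(1-p)* s^2 \<ge> 0" using s by simp_all
    then show ?thesis unfolding Qf_def using c by linarith
  qed
qed

lemma R2_fwd:
  assumes H: "\<forall>s\<ge>0. 1 + q* s > 0 \<longrightarrow> Qf p q s > 0"
  shows "(p, q) \<in> Gamma'"
proof -
  have c0: "2*p + q > 0" using H[rule_format, of 0] unfolding Qf_def by simp
  consider (z) "q = 0" | (n) "q < 0" | (ps) "q > 0" by linarith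
  then show ?thesis
  proof cases
    case z then show ?thesis using c0 unfolding Gamma'_def Gamma_Z'_def by simp
  next
    case n
    have "p + q \<ge> 1"
    proof (rule ccontr)
      assume "\<not> p + q \<ge> 1"
      then have pq: "p + q < 1" by simp
      define s0 where "s0 = -1/q"
      have s0p: "s0 > 0" unfolding s0_def using n by simp
      have "Qf p q s0 * q = (q-1)*(p+q-1)"
        unfolding Qf_def s0_def using n by (simp add: power2_eq_square field_simps)
      moreover have "(q-1)*(p+q-1) > 0" using n pq by (intro mult_neg_neg) auto
      ultimately have "Qf p q s0 < 0" using n by (smt (verit) mult_nonneg_nonpos)
      then obtain s where s: "0 < s" "s < s0" "Qf p q s < 0"
        using neg_near_left[OF isCont_Qf _ s0p] by blast
      have "q* s0 = -1" unfolding s0_def using n by simp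
      moreover have "q* s > q* s0" using s n by simp
      ultimately have "1 + q* s > 0" by simp
      then have "Qf p q s > 0" using H[rule_format, of s] s by simp
      then show False using s by simp
    qed
    then show ?thesis using n unfolding Gamma'_def Gamma_minus'_def by simp
  next
    case ps
    consider (big) "p > 1" | (mid) "-2 \<le> p" "p \<le> 1" | (low) "p < -2" by linarith
    then show ?thesis
    proof cases
      case big
      define A where "A = q*(1-p)"
      define Bc where "Bc = q*(2+p)"
      define C where "C = 2*p+q"
      define K where "K = \<bar>Bc\<bar> + \<bar>C\<bar>"
      have A0: "A < 0" unfolding A_def using ps big by (simp add: mult_pos_neg)
      define s where "s = K/(-A) + 1"
      have K0: "K \<ge> 0" unfolding K_def by simp
      have s1: "s \<ge> 1" unfolding s_def using K0 A0 by (simp add: divide_nonneg_neg)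
      have As: "A* s = -K + A" unfolding s_def using A0 by (simp add: field_simps)
      have Q: "Qf p q s = C + Bc* s + A* s^2" unfolding Qf_def A_def Bc_def C_def by (simp add: algebra_simps)
      have "\<bar>C\<bar>*1 \<le> \<bar>C\<bar>* s" by (rule mult_left_mono) (use s1 in auto)
      then have "C \<le> \<bar>C\<bar>* s" by linarith
      moreover have "Bc* s \<le> \<bar>Bc\<bar>* s" using s1 by (simp add: mult_right_mono)
      ultimately have "Qf p q s \<le> K* s + A* s^2" unfolding Q K_def by (simp add: algebra_simps)
      also have "\<dots> = s*(K + A* s)" by (simp add: power2_eq_square algebra_simps)
      also have "\<dots> = s*A" unfolding As by simp
      also have "\<dots> < 0" using s1 A0 by (simp add: mult_pos_neg)
      finally have "Qf p q s < 0" .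
      moreover have "1 + q* s > 0" using ps s1 by (simp add: add_pos_pos)
      ultimately show ?thesis using H[rule_format, of s] s1 by simp
    next
      case mid
      show ?thesis
      proof (cases "p \<le> 0")
        case True
        then have "(p, q) \<in> {(p,q). -2 \<le> p \<and> p \<le> 0 \<and> 2*p + q > 0}" using mid c0 by simp
        then show ?thesis unfolding Gamma'_def Gamma_plus_def by blast
      next
        case False
        then have "(p, q) \<in> {(p,q). 0 \<le> p \<and> p \<le> 1 \<and> q > 0}" using mid ps by simp
        then show ?thesis unfolding Gamma'_def Gamma_plus_def by blast
      qed
    next
      case low
      define A where "A = q*(1-p)"
      define Bc where "Bc = q*(2+p)"
      define C where "C = 2*p+q"
      have A0: "A > 0" unfolding A_def using ps low by simp
      define s0 where "s0 = -Bc/(2*A)"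
      have "Bc < 0" unfolding Bc_def using ps low by (simp add: mult_pos_neg)
      then have s0p: "s0 > 0" unfolding s0_def using A0 by (simp add: divide_neg_pos)
      have "1 + q* s0 > 0" using ps s0p by (simp add: add_pos_pos)
      then have Qp: "Qf p q s0 > 0" using H s0p by simp
      have Q: "Qf p q s0 = C + Bc* s0 + A* s0^2" unfolding Qf_def A_def Bc_def C_def by (simp add: algebra_simps)
      have "4*A*(C + Bc* s0 + A* s0^2) = 4*A*C - Bc^2"
        unfolding s0_def using A0 by (simp add: power2_eq_square field_simps)
      then have "4*A*Qf p q s0 = 4*A*C - Bc^2" unfolding Q .
      moreover have "4*A*Qf p q s0 > 0" using Qp A0 by simp
      ultimately have "4*A*C - Bc^2 > 0" by simp
      moreover have "4*A*C - Bc^2 = q*(-p)*(q*(8+p) - 8*(1-p))"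
        unfolding A_def Bc_def C_def by (simp add: power2_eq_square algebra_simps)
      ultimately have h1: "q*(-p)*(q*(8+p) - 8*(1-p)) > 0" by simp
      have h2: "q*(-p) > 0" using ps low by (intro mult_pos_pos) auto
      have "q*(8+p) - 8*(1-p) > 0" by (rule zero_less_mult_pos[OF h1 h2])
      then have qq: "q*(8+p) > 8*(1-p)" by simp
      have "8 + p > 0"
      proof (rule ccontr)
        assume "\<not> 8 + p > 0"
        then have "q*(8+p) \<le> 0" using ps by (simp add: mult_nonneg_nonpos)
        then show False using qq low by simp
      qed
      then have "q > lam p" unfolding lam_def using qq by (simp add: divide_less_eq)
      then show ?thesis using low \<open>8 + p > 0\<close> unfolding Gamma'_def Gamma_plus_def by simp
    qed
  qed
qed

lemma Gamma_sub: "Gamma \<subseteq> Gamma'"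
  unfolding Gamma_def Gamma'_def Gamma_minus_def Gamma_minus'_def Gamma_Z_def Gamma_Z'_def by auto

lemma R3_bwd:
  assumes G: "(p, q) \<in> Gamma" and s: "s \<ge> 0" "1 + q* s > 0"
  shows "Tf p q s > 0"
proof -
  consider (m) "p + q = 1" "q < 0" | (z) "q = 0" "p > 0" "p \<le> 2" | (a) "-8 < p" "p \<le> -2" "q > lam p"
    | (b) "-2 \<le> p" "p \<le> 0" "2*p + q > 0" | (c) "0 \<le> p" "p \<le> 1" "q > 0"
    using G unfolding Gamma_def Gamma_minus_def Gamma_Z_def Gamma_plus_def by auto
  then show ?thesis
  proof cases
    case m
    then have pe: "p = 1 - q" by simp
    have "Tf p q s = (1 + q* s)*(2 + s - q)" unfolding Tf_def pe by (simp add: power2_eq_square algebra_simps)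
    moreover have "(1 + q* s)*(2 + s - q) > 0" using s m by (intro mult_pos_pos) auto
    ultimately show ?thesis by simp
  next
    case z
    have "(1 + 2*q - (1-p)^2) = p*(2-p)" using z by (simp add: power2_eq_square algebra_simps)
    moreover have "p*(2-p)* s \<ge> 0" using z s by simp
    ultimately show ?thesis unfolding Tf_def using z by simp
  next
    case a
    have l: "lam p * (8 + p) = 8*(1-p)" unfolding lam_def using a by simp
    have q0: "q*(8+p) > 8*(1-p)" using a l by (smt (verit) mult_strict_right_mono)
    have "lam p > 0" unfolding lam_def using a by (simp add: divide_pos_pos)
    then have qp: "q > 0" using a by simp
    define C1 where "C1 = 1 + 2*q - (1-p)^2"
    have id: "4*q*Tf p q s = (2*q* s + C1)^2 + p^2*(4*q - (p-2)^2)"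
      unfolding Tf_def C1_def by (simp add: power2_eq_square algebra_simps)
    have e1: "32*(1-p) - (p-2)^2*(8+p) = (-p)*(p+2)^2" by (simp add: power2_eq_square algebra_simps)
    have "(-p)*(p+2)^2 \<ge> 0" using a by (intro mult_nonneg_nonneg) auto
    then have "(p-2)^2*(8+p) \<le> 32*(1-p)" using e1 by simp
    also have "\<dots> < 4*q*(8+p)" using q0 by simp
    finally have "(p-2)^2 < 4*q" using a by (simp add: mult_less_cancel_right)
    moreover have "p^2 > 0" using a by simp
    ultimately have "p^2*(4*q - (p-2)^2) > 0" by simp
    then have "4*q*Tf p q s > 0" unfolding id by (smt (verit) zero_le_power2)
    then show ?thesis using qp by (simp add: zero_less_mult_iff)
  next
    case b
    have qp: "q > 0" using b by linarith
    have "1 + 2*q - (1-p)^2 = 2*(p+q) - p^2" by (simp add: power2_eq_square algebra_simps)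
    moreover have "2*(p+q) - p^2 \<ge> (-p)*(2+p)" using b by (simp add: power2_eq_square algebra_simps)
    moreover have "(-p)*(2+p) \<ge> 0" using b by (intro mult_nonneg_nonneg) auto
    ultimately have c1: "(1 + 2*q - (1-p)^2)* s \<ge> 0" using s by simp
    have "q* s^2 \<ge> 0" using qp by simp
    then show ?thesis unfolding Tf_def using c1 b by linarith
  next
    case c
    have "1 + 2*q - (1-p)^2 = 2*q + p*(2-p)" by (simp add: power2_eq_square algebra_simps)
    moreover have "p*(2-p) \<ge> 0" using c by simp
    ultimately have "1 + 2*q - (1-p)^2 \<ge> 0" using c by linarith
    then have c1: "(1 + 2*q - (1-p)^2)* s \<ge> 0" using s by simp
    have "q* s^2 \<ge> 0" using c by simp
    then show ?thesis unfolding Tf_def using c1 c by linarith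
  qed
qed

lemma R3_fwd:
  assumes H: "\<forall>s\<ge>0. 1 + q* s > 0 \<longrightarrow> Qf p q s > 0 \<and> Tf p q s > 0"
  shows "(p, q) \<in> Gamma"
proof -
  have "(p, q) \<in> Gamma'" using H by (intro R2_fwd) blast
  then consider (m) "p + q \<ge> 1" "q < 0" | (z) "q = 0" "p > 0" | (pl) "(p, q) \<in> Gamma_plus"
    unfolding Gamma'_def Gamma_minus'_def Gamma_Z'_def by auto
  then show ?thesis
  proof cases
    case m
    have "p + q = 1"
    proof (rule ccontr)
      assume "p + q \<noteq> 1"
      then have pq: "p + q - 1 \<noteq> 0" by simp
      define s0 where "s0 = -1/q"
      have s0p: "s0 > 0" unfolding s0_def using m by simp
      have "Tf p q s0 * s0 = - (((p+q-1)/q)^2)"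
        unfolding Tf_def s0_def using m by (simp add: power2_eq_square field_simps)
      moreover have "((p+q-1)/q)^2 > 0" using pq m by simp
      ultimately have "Tf p q s0 * s0 < 0" by simp
      then have "Tf p q s0 < 0" using s0p by (simp add: mult_less_0_iff)
      then obtain s where s: "0 < s" "s < s0" "Tf p q s < 0"
        using neg_near_left[OF isCont_Tf _ s0p] by blast
      have "q* s0 = -1" unfolding s0_def using m by simp
      moreover have "q* s > q* s0" using s m by simp
      ultimately have "1 + q* s > 0" by simp
      then have "Tf p q s > 0" using H[rule_format, of s] s by simp
      then show False using s by simp
    qed
    then show ?thesis using m unfolding Gamma_def Gamma_minus_def by simp
  next
    case z
    have "p \<le> 2"
    proof (rule ccontr)
      assume "\<not> p \<le> 2"
      then have p2: "p > 2" by simp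
      define s where "s = 2/(p-2) + 1"
      have s0: "s \<ge> 0" unfolding s_def using p2 by simp
      have "Tf p q s = -p*(p-2)" unfolding Tf_def s_def z using p2 by (simp add: power2_eq_square field_simps)
      moreover have "p*(p-2) > 0" using p2 by simp
      moreover have "Tf p q s > 0" using H[rule_format, of s] s0 z by simp
      ultimately show False by simp
    qed
    then show ?thesis using z unfolding Gamma_def Gamma_Z_def by simp
  next
    case pl then show ?thesis unfolding Gamma_def by simp
  qed
qed

lemma core3:
  fixes G PP s :: real
  assumes G: "G > 0" and P0: "PP \<ge> 0" and PG: "PP \<le> s*G" and s: "s \<ge> 0" "1 + q* s > 0"
    and Q: "Qf p q s > 0" and T: "Tf p q s > 0" and z: "s = 0 \<Longrightarrow> PP = 0"
  shows "G + q*PP > 0" "p*(p-2+q-q* s)*PP + Tf p q s*G > 0"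
proof -
  show "G + q*PP > 0"
  proof (cases "q \<ge> 0")
    case True then show ?thesis using G P0 by (simp add: add_pos_nonneg)
  next
    case False
    then have "q*PP \<ge> q*(s*G)" using PG by (simp add: mult_left_mono_neg)
    moreover have "G*(1 + q* s) > 0" using G s by simp
    ultimately show ?thesis by (simp add: algebra_simps)
  qed
  show "p*(p-2+q-q* s)*PP + Tf p q s*G > 0"
  proof (cases "s = 0")
    case True then show ?thesis using z T G by simp
  next
    case False
    then have sp: "s > 0" using s by simp
    have id: "s*(p*(p-2+q-q* s)*PP + Tf p q s*G) = Qf p q s*PP + Tf p q s*(s*G - PP)"
      unfolding QT_rel by (simp add: algebra_simps)
    have "Qf p q s*PP + Tf p q s*(s*G - PP) > 0"
    proof (cases "PP > 0")
      case True
      have "Qf p q s*PP > 0" using True Q by simp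
      moreover have "Tf p q s*(s*G - PP) \<ge> 0" using T PG by simp
      ultimately show ?thesis by simp
    next
      case False
      then have "PP = 0" using P0 by simp
      then show ?thesis using T sp G by simp
    qed
    then have "s*(p*(p-2+q-q* s)*PP + Tf p q s*G) > 0" unfolding id .
    then show ?thesis using sp by (simp add: zero_less_mult_iff)
  qed
qed

lemma core2:
  fixes G PP s :: real
  assumes G: "G > 0" and PG: "PP = s*G" and s: "s \<ge> 0" "1 + q* s > 0" and Q: "Qf p q s > 0"
  shows "G + q*PP > 0" "p*(p-2+q-q* s)*PP + Tf p q s*G > 0"
proof -
  have "G*(1 + q* s) > 0" using G s by simp
  then show "G + q*PP > 0" unfolding PG by (simp add: algebra_simps)
  have "p*(p-2+q-q* s)*PP + Tf p q s*G = Qf p q s * G" unfolding PG QT_rel by (simp add: algebra_simps)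
  then show "p*(p-2+q-q* s)*PP + Tf p q s*G > 0" using Q G by simp
qed

lemma bwd3:
  fixes e X Y :: "'a::real_inner"
  assumes H: "\<forall>s\<ge>0. 1 + q* s > 0 \<longrightarrow> Qf p q s > 0 \<and> Tf p q s > 0"
    and b: "1 + q*inner e e > 0" and ind: "independent {X, Y}" "X \<noteq> Y"
  shows "sec_curv (hpq_fib p q) e X Y > 0"
proof -
  define s where "s = inner e e"
  define G where "G = inner X X * inner Y Y - (inner X Y)^2"
  define PP where "PP = (inner X e)^2 * inner Y Y + (inner Y e)^2 * inner X X - 2 * inner X e * inner Y e * inner X Y"
  have G0: "G > 0" unfolding G_def by (rule gram_pos[OF ind])
  have P0: "PP \<ge> 0" unfolding PP_def by (rule PP_nonneg)
  have PG: "PP \<le> s*G" unfolding PP_def s_def G_def by (rule D3_nonneg)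
  have s0: "s \<ge> 0" unfolding s_def by simp
  have b0: "1 + q* s > 0" using b s_def by simp
  have z: "PP = 0" if "s = 0"
  proof -
    have "e = 0" using that unfolding s_def by simp
    then show ?thesis unfolding PP_def by simp
  qed
  have QT: "Qf p q s > 0" "Tf p q s > 0" using H s0 b0 by auto
  note c = core3[OF G0 P0 PG s0 b0 QT z]
  show ?thesis
    using sec_pos_iff[OF b, of X Y p] c unfolding s_def G_def PP_def by simp
qed

lemma bwd2:
  fixes e X Y :: "'a::euclidean_space"
  assumes d: "DIM('a) = 2" and H: "\<forall>s\<ge>0. 1 + q* s > 0 \<longrightarrow> Qf p q s > 0"
    and b: "1 + q*inner e e > 0" and ind: "independent {X, Y}" "X \<noteq> Y"
  shows "sec_curv (hpq_fib p q) e X Y > 0"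
proof -
  define s where "s = inner e e"
  define G where "G = inner X X * inner Y Y - (inner X Y)^2"
  define PP where "PP = (inner X e)^2 * inner Y Y + (inner Y e)^2 * inner X X - 2 * inner X e * inner Y e * inner X Y"
  have G0: "G > 0" unfolding G_def by (rule gram_pos[OF ind])
  obtain a c where ac: "e = a *\<^sub>R X + c *\<^sub>R Y" using span2_obtain[OF dim2_span[OF d ind]] by blast
  have PG: "PP = s*G" unfolding PP_def s_def G_def by (rule D3_zero[OF ac])
  have s0: "s \<ge> 0" unfolding s_def by simp
  have b0: "1 + q* s > 0" using b s_def by simp
  have Q: "Qf p q s > 0" using H s0 b0 by auto
  note cc = core2[OF G0 PG s0 b0 Q]
  show ?thesis
    using sec_pos_iff[OF b, of X Y p] cc unfolding s_def G_def PP_def by simp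
qed

lemma P3:
  assumes d: "DIM('a::euclidean_space) \<ge> 3"
  shows "Pcond p q TYPE('a) \<longleftrightarrow> (p, q) \<in> Gamma"
proof
  assume P: "Pcond p q TYPE('a)"
  have "\<forall>s\<ge>0. 1 + q* s > 0 \<longrightarrow> Qf p q s > 0 \<and> Tf p q s > 0"
  proof (intro allI impI conjI)
    fix s :: real assume "s \<ge> 0" "1 + q* s > 0"
    then show "Qf p q s > 0" using fwd_Q[where 'a='a, of p q s] d P by simp
    show "Tf p q s > 0" using fwd_T[OF d P] \<open>s \<ge> 0\<close> \<open>1 + q* s > 0\<close> by simp
  qed
  then show "(p, q) \<in> Gamma" by (rule R3_fwd)
next
  assume G: "(p, q) \<in> Gamma"
  have H: "\<forall>s\<ge>0. 1 + q* s > 0 \<longrightarrow> Qf p q s > 0 \<and> Tf p q s > 0"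
    using R3_bwd[OF G] R2_bwd[of p q] G Gamma_sub by blast
  show "Pcond p q TYPE('a)" unfolding Pcond_def BMq_iff using bwd3[OF H] by blast
qed

lemma P2:
  assumes d: "DIM('a::euclidean_space) = 2"
  shows "Pcond p q TYPE('a) \<longleftrightarrow> (p, q) \<in> Gamma'"
proof
  assume P: "Pcond p q TYPE('a)"
  have "\<forall>s\<ge>0. 1 + q* s > 0 \<longrightarrow> Qf p q s > 0"
    using fwd_Q[where 'a='a, of p q] d P by simp
  then show "(p, q) \<in> Gamma'" by (rule R2_fwd)
next
  assume G: "(p, q) \<in> Gamma'"
  have H: "\<forall>s\<ge>0. 1 + q* s > 0 \<longrightarrow> Qf p q s > 0" using R2_bwd[OF G] by blast
  show "Pcond p q TYPE('a)" unfolding Pcond_def BMq_iff using bwd2[OF d H] by blast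
qed

theorem theorem2p8:
  fixes p q :: real
  shows "(DIM('a::euclidean_space) \<ge> 3 \<longrightarrow>
           ((\<forall>e::'a. e \<in> BMq q \<longrightarrow> (\<forall>X Y::'a. independent {X, Y} \<and> X \<noteq> Y \<longrightarrow>
               sec_curv (hpq_fib p q) e X Y > 0)) \<longleftrightarrow> (p, q) \<in> Gamma))
       \<and> (DIM('a) = 2 \<longrightarrow>
           ((\<forall>e::'a. e \<in> BMq q \<longrightarrow> (\<forall>X Y::'a. independent {X, Y} \<and> X \<noteq> Y \<longrightarrow>
               sec_curv (hpq_fib p q) e X Y > 0)) \<longleftrightarrow> (p, q) \<in> Gamma'))"
  using P3[where 'a='a, of p q] P2[where 'a='a, of p q] unfolding Pcond_def by blast

end
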